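(* Let $n\ge 1$, $k\ge 0$, and let $w(u_1,\dots,u_n)$ be a word lying in the commutator subgroup of the free group $\langle u_1,\dots,u_n\rangle$. Let $G$ be any finite group and $C_1,\dots,C_k$ any conjugacy classes of $G$. Then the number of tuples $(u_1,\dots,u_n,z_1,\dots,z_k)$ with $u_i\in G$, $z_i\in C_i$ and $w(u_1,\dots,u_n)\,z_1\cdots z_k=1$ is divisible by $|G|$. *)

theory Defs
  imports "HOL-Algebra.Algebra"
begin

text \<open>Free group on generators 0..<n, as reduced words. A letter (i, b) denotes
  generator u_i if b = False and its inverse if b = True.\<close>

type_synonym letter = "nat \<times> bool"

definition inv_letter :: "letter \<Rightarrow> letter" where
  "inv_letter x = (fst x, \<not> snd x)"

definition fw_cons :: "letter \<Rightarrow> letter list \<Rightarrow> letter list" where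
  "fw_cons x ys = (case ys of [] \<Rightarrow> [x]
     | y # ys' \<Rightarrow> (if y = inv_letter x then ys' else x # ys))"

definition reduce_word :: "letter list \<Rightarrow> letter list" where
  "reduce_word xs = foldr fw_cons xs []"

definition reduced_word :: "letter list \<Rightarrow> bool" where
  "reduced_word xs \<longleftrightarrow> (\<forall>i. Suc i < length xs \<longrightarrow> xs ! Suc i \<noteq> inv_letter (xs ! i))"

definition free_group :: "nat \<Rightarrow> letter list monoid" where
  "free_group n = \<lparr> carrier = {xs. set xs \<subseteq> {..<n} \<times> UNIV \<and> reduced_word xs},
                    monoid.mult = (\<lambda>xs ys. reduce_word (xs @ ys)),
                    monoid.one = [] \<rparr>"

definition eval_word :: "('a, 'b) monoid_scheme \<Rightarrow> (nat \<Rightarrow> 'a) \<Rightarrow> letter list \<Rightarrow> 'a" where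
  "eval_word G u w = foldr (\<lambda>(i, b) acc. (if b then inv\<^bsub>G\<^esub> (u i) else u i) \<otimes>\<^bsub>G\<^esub> acc) w \<one>\<^bsub>G\<^esub>"

definition ordered_prod :: "('a, 'b) monoid_scheme \<Rightarrow> (nat \<Rightarrow> 'a) \<Rightarrow> nat \<Rightarrow> 'a" where
  "ordered_prod G z k = foldr (\<lambda>i acc. z i \<otimes>\<^bsub>G\<^esub> acc) [0..<k] \<one>\<^bsub>G\<^esub>"

definition conj_class :: "('a, 'b) monoid_scheme \<Rightarrow> 'a \<Rightarrow> 'a set" where
  "conj_class G g = {h \<otimes>\<^bsub>G\<^esub> g \<otimes>\<^bsub>G\<^esub> inv\<^bsub>G\<^esub> h | h. h \<in> carrier G}"

end

theory Submission
  imports Defs "HOL-Algebra.Multiplicative_Group"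
begin


lemma action_mk:
  fixes G (structure)
  assumes G: "group G"
    and cl: "\<And>c x. c \<in> carrier G \<Longrightarrow> x \<in> E \<Longrightarrow> act c x \<in> E"
    and one: "\<And>x. x \<in> E \<Longrightarrow> act \<one>\<^bsub>G\<^esub> x = x"
    and mul: "\<And>c d x. c \<in> carrier G \<Longrightarrow> d \<in> carrier G \<Longrightarrow> x \<in> E \<Longrightarrow>
               act (c \<otimes>\<^bsub>G\<^esub> d) x = act c (act d x)"
  shows "group_action G E (\<lambda>c. \<lambda>x\<in>E. act c x)"
proof -
  interpret group G by fact
  have bij: "(\<lambda>x\<in>E. act c x) \<in> Bij E" if c: "c \<in> carrier G" for c
  proof -
    have "bij_betw (act c) E E"
    proof (rule bij_betwI[where g="act (inv c)"])
      show "act c \<in> E \<rightarrow> E" using cl c by auto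
      show "act (inv c) \<in> E \<rightarrow> E" using cl c by auto
      fix x assume x: "x \<in> E"
      show "act (inv c) (act c x) = x" using mul[of "inv c" c x, symmetric] c x one[of x] by simp
      show "act c (act (inv c) x) = x" using mul[of c "inv c" x, symmetric] c x one[of x] by simp
    qed
    then show ?thesis unfolding Bij_def
      by simp
  qed
  show ?thesis
    unfolding group_action_def group_hom_def group_hom_axioms_def
  proof (intro conjI)
    show "group G" by fact
    show "group (BijGroup E)" by (rule group_BijGroup)
    show "(\<lambda>c. \<lambda>x\<in>E. act c x) \<in> hom G (BijGroup E)"
    proof (rule homI)
      fix c assume "c \<in> carrier G"
      then show "(\<lambda>x\<in>E. act c x) \<in> carrier (BijGroup E)"
        using bij by (simp add: BijGroup_def)
    next
      fix c d assume c: "c \<in> carrier G" and d: "d \<in> carrier G"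
      show "(\<lambda>x\<in>E. act (c \<otimes> d) x) = (\<lambda>x\<in>E. act c x) \<otimes>\<^bsub>BijGroup E\<^esub> (\<lambda>x\<in>E. act d x)"
        using bij c d by (auto simp add: BijGroup_def compose_def mul cl)
    qed
  qed
qed

lemma count_dvd:
  fixes G (structure)
  assumes G: "group G" and fin: "finite (carrier G)" and finX: "finite XX"
    and cl: "\<And>c x. c \<in> carrier G \<Longrightarrow> x \<in> XX \<Longrightarrow> act c x \<in> XX"
    and one: "\<And>x. x \<in> XX \<Longrightarrow> act \<one>\<^bsub>G\<^esub> x = x"
    and mul: "\<And>c d x. c \<in> carrier G \<Longrightarrow> d \<in> carrier G \<Longrightarrow> x \<in> XX \<Longrightarrow>
               act (c \<otimes>\<^bsub>G\<^esub> d) x = act c (act d x)"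
    and sigcl: "\<And>x. x \<in> XX \<Longrightarrow> \<sigma> x \<in> XX"
    and comm: "\<And>c x. c \<in> carrier G \<Longrightarrow> x \<in> XX \<Longrightarrow> act c (\<sigma> x) = \<sigma> (act c x)"
    and Pinv: "\<And>c x. c \<in> carrier G \<Longrightarrow> x \<in> XX \<Longrightarrow> P (act c x) = P x"
  shows "order G dvd card {(g, x). g \<in> carrier G \<and> x \<in> XX \<and> P x \<and> act g x = \<sigma> x}"
proof -
  interpret group G by fact
  define E where "E = {x \<in> XX. P x \<and> (\<exists>g\<in>carrier G. act g x = \<sigma> x)}"
  have EX: "E \<subseteq> XX" unfolding E_def by auto
  have finE: "finite E" using finX EX finite_subset by blast
  have clE: "act c x \<in> E" if c: "c \<in> carrier G" and x: "x \<in> E" for c x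
  proof -
    from x obtain g where g: "g \<in> carrier G" "act g x = \<sigma> x" and xX: "x \<in> XX" and Px: "P x"
      unfolding E_def by auto
    have "act (c \<otimes> g \<otimes> inv c) (act c x) = act c (act g (act (inv c) (act c x)))"
      using c g xX by (simp add: mul cl)
    also have "act (inv c) (act c x) = x" using mul[of "inv c" c x, symmetric] c xX one[of x] by simp
    finally have "act (c \<otimes> g \<otimes> inv c) (act c x) = \<sigma> (act c x)"
      using g c xX comm by simp
    moreover have "c \<otimes> g \<otimes> inv c \<in> carrier G" using c g by simp
    ultimately show ?thesis using c xX Px Pinv cl unfolding E_def by auto
  qed
  interpret A: group_action G E "\<lambda>c. \<lambda>x\<in>E. act c x"
    by (rule action_mk[OF G]) (use clE one mul EX in auto)
  let ?S = "{(g, x). g \<in> carrier G \<and> x \<in> XX \<and> P x \<and> act g x = \<sigma> x}"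
  have S_eq: "?S = (SIGMA x:E. {g \<in> carrier G. act g x = \<sigma> x}) \<inverse>"
    unfolding E_def by auto
  have "card ?S = card (SIGMA x:E. {g \<in> carrier G. act g x = \<sigma> x})"
    unfolding S_eq by (rule card_inverse)
  also have "\<dots> = (\<Sum>x\<in>E. card {g \<in> carrier G. act g x = \<sigma> x})"
    by (rule card_SigmaI) (use finE fin in auto)
  also have "\<dots> = (\<Sum>x\<in>E. card (stabilizer G (\<lambda>c. \<lambda>x\<in>E. act c x) x))"
  proof (rule sum.cong[OF refl])
    fix x assume x: "x \<in> E"
    then obtain g0 where g0: "g0 \<in> carrier G" "act g0 x = \<sigma> x" and xX: "x \<in> XX"
      unfolding E_def by auto
    have "{g \<in> carrier G. act g x = \<sigma> x} = (\<lambda>h. g0 \<otimes> h) ` stabilizer G (\<lambda>c. \<lambda>x\<in>E. act c x) x"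
    proof (intro equalityI subsetI)
      fix g assume "g \<in> {g \<in> carrier G. act g x = \<sigma> x}"
      then have g: "g \<in> carrier G" "act g x = \<sigma> x" by auto
      have "act (inv g0 \<otimes> g) x = act (inv g0) (act g0 x)" using g g0 xX mul by simp
      also have "\<dots> = x" using mul[of "inv g0" g0 x, symmetric] g0 xX one[of x] by simp
      finally have "inv g0 \<otimes> g \<in> stabilizer G (\<lambda>c. \<lambda>x\<in>E. act c x) x"
        unfolding stabilizer_def using g g0 x by simp
      moreover have "g = g0 \<otimes> (inv g0 \<otimes> g)" using g g0 by (simp add: m_assoc[symmetric])
      ultimately show "g \<in> (\<lambda>h. g0 \<otimes> h) ` stabilizer G (\<lambda>c. \<lambda>x\<in>E. act c x) x" by blast
    next
      fix g assume "g \<in> (\<lambda>h. g0 \<otimes> h) ` stabilizer G (\<lambda>c. \<lambda>x\<in>E. act c x) x"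
      then obtain h where h: "h \<in> carrier G" "act h x = x" and gh: "g = g0 \<otimes> h"
        unfolding stabilizer_def using x by auto
      show "g \<in> {g \<in> carrier G. act g x = \<sigma> x}" using h gh g0 xX mul by simp
    qed
    moreover have "inj_on (\<lambda>h. g0 \<otimes> h) (stabilizer G (\<lambda>c. \<lambda>x\<in>E. act c x) x)"
      using g0 by (auto simp: inj_on_def stabilizer_def)
    ultimately show "card {g \<in> carrier G. act g x = \<sigma> x} = card (stabilizer G (\<lambda>c. \<lambda>x\<in>E. act c x) x)"
      by (simp add: card_image)
  qed
  also have "\<dots> = (\<Sum>orb\<in>orbits G E (\<lambda>c. \<lambda>x\<in>E. act c x). \<Sum>x\<in>orb. card (stabilizer G (\<lambda>c. \<lambda>x\<in>E. act c x) x))"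
    using A.disjoint_sum[OF finE, of "\<lambda>x. card (stabilizer G (\<lambda>c. \<lambda>x\<in>E. act c x) x)"] by simp
  also have "\<dots> = (\<Sum>orb\<in>orbits G E (\<lambda>c. \<lambda>x\<in>E. act c x). order G)"
    using A.card_stablizer_sum[OF fin] by simp
  finally show ?thesis by simp
qed



definition lsgn :: "nat \<Rightarrow> letter \<Rightarrow> int" where
  "lsgn j l = (if fst l = j then (if snd l then -1 else 1) else 0)"

definition esum :: "nat \<Rightarrow> letter list \<Rightarrow> int" where
  "esum j xs = sum_list (map (lsgn j) xs)"

lemma inv_inv_letter[simp]: "inv_letter (inv_letter a) = a"
  by (simp add: inv_letter_def)

lemma lsgn_inv[simp]: "lsgn j (inv_letter a) = - lsgn j a"
  by (simp add: lsgn_def inv_letter_def)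

lemma esum_Nil[simp]: "esum j [] = 0" and esum_Cons[simp]: "esum j (a # xs) = lsgn j a + esum j xs"
  and esum_append[simp]: "esum j (xs @ ys) = esum j xs + esum j ys"
  by (simp_all add: esum_def)

lemma esum_fw_cons: "esum j (fw_cons a ys) = lsgn j a + esum j ys"
  by (cases ys) (auto simp: fw_cons_def)

lemma esum_foldr: "esum j (foldr fw_cons xs ys) = esum j xs + esum j ys"
  by (induction xs) (auto simp: esum_fw_cons)

lemma esum_reduce[simp]: "esum j (reduce_word xs) = esum j xs"
  using esum_foldr[of j xs "[]"] by (simp add: reduce_word_def)

lemma esum_rinv: "esum j (rev (map inv_letter xs)) = - esum j xs"
  by (induction xs) auto

lemma reduced_Cons: "reduced_word (a # b # xs) \<longleftrightarrow> b \<noteq> inv_letter a \<and> reduced_word (b # xs)"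
proof
  assume r: "reduced_word (a # b # xs)"
  have "b \<noteq> inv_letter a" using r[unfolded reduced_word_def, rule_format, of 0] by simp
  moreover have "reduced_word (b # xs)" unfolding reduced_word_def
  proof (intro allI impI)
    fix i assume "Suc i < length (b # xs)"
    then show "(b # xs) ! Suc i \<noteq> inv_letter ((b # xs) ! i)"
      using r[unfolded reduced_word_def, rule_format, of "Suc i"] by simp
  qed
  ultimately show "b \<noteq> inv_letter a \<and> reduced_word (b # xs)" by simp
next
  assume h: "b \<noteq> inv_letter a \<and> reduced_word (b # xs)"
  show "reduced_word (a # b # xs)" unfolding reduced_word_def
  proof (intro allI impI)
    fix i assume i: "Suc i < length (a # b # xs)"
    show "(a # b # xs) ! Suc i \<noteq> inv_letter ((a # b # xs) ! i)"
    proof (cases i)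
      case 0 then show ?thesis using h by simp
    next
      case (Suc m)
      then show ?thesis using h i unfolding reduced_word_def by auto
    qed
  qed
qed

lemma reduced_Nil[simp]: "reduced_word []" and reduced_single[simp]: "reduced_word [a]"
  by (auto simp: reduced_word_def)

lemma reduced_tl: "reduced_word (a # xs) \<Longrightarrow> reduced_word xs"
  by (cases xs) (auto simp: reduced_Cons)

lemma reduced_fw_cons: "reduced_word ys \<Longrightarrow> reduced_word (fw_cons a ys)"
proof (cases ys)
  case Nil then show ?thesis by (simp add: fw_cons_def)
next
  case (Cons y ys')
  assume r: "reduced_word ys"
  show ?thesis
  proof (cases "y = inv_letter a")
    case True then show ?thesis using r Cons by (simp add: fw_cons_def reduced_tl)
  next
    case False then show ?thesis using r Cons by (simp add: fw_cons_def reduced_Cons)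
  qed
qed

lemma reduced_foldr: "reduced_word ys \<Longrightarrow> reduced_word (foldr fw_cons xs ys)"
  by (induction xs) (auto simp: reduced_fw_cons)

lemma reduced_reduce: "reduced_word (reduce_word xs)"
  by (simp add: reduce_word_def reduced_foldr)

lemma fw_cons_reduced: "reduced_word (a # xs) \<Longrightarrow> fw_cons a xs = a # xs"
  by (cases xs) (auto simp: fw_cons_def reduced_Cons)

lemma reduce_reduced: "reduced_word xs \<Longrightarrow> reduce_word xs = xs"
proof (induction xs)
  case Nil then show ?case by (simp add: reduce_word_def)
next
  case (Cons a xs)
  then have "reduce_word xs = xs" using reduced_tl by blast
  then show ?case using Cons.prems by (simp add: reduce_word_def fw_cons_reduced)
qed

lemma fw_cancel: "reduced_word ys \<Longrightarrow> fw_cons (inv_letter a) (fw_cons a ys) = ys"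
proof (cases ys)
  case Nil then show ?thesis by (simp add: fw_cons_def)
next
  case (Cons y ys')
  assume r: "reduced_word ys"
  show ?thesis
  proof (cases "y = inv_letter a")
    case True
    show ?thesis
    proof (cases ys')
      case Nil then show ?thesis using True Cons by (simp add: fw_cons_def)
    next
      case (Cons z zs)
      then have "z \<noteq> a" using r \<open>ys = y # ys'\<close> True by (auto simp: reduced_Cons)
      then show ?thesis using True Cons \<open>ys = y # ys'\<close> by (simp add: fw_cons_def)
    qed
  next
    case False then show ?thesis using Cons by (simp add: fw_cons_def)
  qed
qed

lemma fw_cancel': "reduced_word ys \<Longrightarrow> fw_cons a (fw_cons (inv_letter a) ys) = ys"
  using fw_cancel[of ys "inv_letter a"] by simp

lemma foldr_rinv: "reduced_word ys \<Longrightarrow> foldr fw_cons (rev (map inv_letter xs)) (foldr fw_cons xs ys) = ys"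
proof (induction xs arbitrary: ys)
  case Nil then show ?case by simp
next
  case (Cons a xs)
  have r: "reduced_word (foldr fw_cons xs ys)" using Cons.prems reduced_foldr by blast
  have "foldr fw_cons (rev (map inv_letter (a # xs))) (foldr fw_cons (a # xs) ys)
      = foldr fw_cons (rev (map inv_letter xs)) (fw_cons (inv_letter a) (fw_cons a (foldr fw_cons xs ys)))"
    by simp
  also have "\<dots> = ys" using fw_cancel[OF r] Cons by simp
  finally show ?case .
qed

lemma foldr_fw_cons_reduce:
  assumes "reduced_word r" "reduced_word ys"
  shows "foldr fw_cons (fw_cons a r) ys = fw_cons a (foldr fw_cons r ys)"
proof (cases r)
  case Nil then show ?thesis by (simp add: fw_cons_def)
next
  case (Cons y r')
  show ?thesis
  proof (cases "y = inv_letter a")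
    case True
    have r': "reduced_word (foldr fw_cons r' ys)" using assms(2) reduced_foldr by blast
    have "fw_cons a (foldr fw_cons r ys) = fw_cons a (fw_cons (inv_letter a) (foldr fw_cons r' ys))"
      using Cons True by simp
    also have "\<dots> = foldr fw_cons r' ys" using fw_cancel'[OF r'] .
    finally show ?thesis using Cons True by (simp add: fw_cons_def)
  next
    case False then show ?thesis using Cons by (simp add: fw_cons_def)
  qed
qed

lemma foldr_reduce: "reduced_word ys \<Longrightarrow> foldr fw_cons (reduce_word zs) ys = foldr fw_cons zs ys"
proof (induction zs)
  case Nil then show ?case by (simp add: reduce_word_def)
next
  case (Cons a zs)
  have "reduce_word (a # zs) = fw_cons a (reduce_word zs)" by (simp add: reduce_word_def)
  then show ?case using foldr_fw_cons_reduce[OF reduced_reduce Cons.prems] Cons by simp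
qed

lemma reduce_append: "reduce_word (xs @ ys) = foldr fw_cons xs (reduce_word ys)"
  by (simp add: reduce_word_def)

lemma set_fw_cons: "set (fw_cons a ys) \<subseteq> insert a (set ys)"
  by (cases ys) (auto simp: fw_cons_def)

lemma set_foldr: "set (foldr fw_cons xs ys) \<subseteq> set xs \<union> set ys"
  apply (induction xs)
   apply simp
  using set_fw_cons by fastforce

lemma set_reduce: "set (reduce_word xs) \<subseteq> set xs"
  using set_foldr[of xs "[]"] by (simp add: reduce_word_def)

lemma fg_mult: "x \<otimes>\<^bsub>free_group n\<^esub> y = reduce_word (x @ y)"
  by (simp add: free_group_def)

lemma fg_carrier: "x \<in> carrier (free_group n) \<longleftrightarrow> set x \<subseteq> {..<n} \<times> UNIV \<and> reduced_word x"
  by (simp add: free_group_def)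

lemma fg_one: "\<one>\<^bsub>free_group n\<^esub> = []"
  by (simp add: free_group_def)

lemma fg_mult_closed: "x \<otimes>\<^bsub>free_group n\<^esub> y \<in> carrier (free_group n)"
  if "x \<in> carrier (free_group n)" "y \<in> carrier (free_group n)"
  using that set_reduce[of "x @ y"] reduced_reduce[of "x @ y"]
  by (auto simp: fg_mult fg_carrier)

lemma fg_inv:
  assumes x: "x \<in> carrier (free_group n)"
  shows "inv\<^bsub>free_group n\<^esub> x = reduce_word (rev (map inv_letter x))"
proof -
  let ?y0 = "reduce_word (rev (map inv_letter x))"
  have xr: "reduced_word x" using x by (simp add: fg_carrier)
  have s1: "set (rev (map inv_letter x)) \<subseteq> {..<n} \<times> UNIV"
    using x by (auto simp: fg_carrier inv_letter_def)
  have y0c: "?y0 \<in> carrier (free_group n)"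
    using s1 set_reduce[of "rev (map inv_letter x)"] reduced_reduce[of "rev (map inv_letter x)"]
    unfolding fg_carrier by blast
  have rr: "rev (map inv_letter (rev (map inv_letter x))) = x"
    by (simp add: rev_map comp_def)
  have m1: "x \<otimes>\<^bsub>free_group n\<^esub> ?y0 = []"
  proof -
    have "x \<otimes>\<^bsub>free_group n\<^esub> ?y0 = foldr fw_cons x (reduce_word ?y0)"
      by (simp add: fg_mult reduce_append)
    also have "\<dots> = foldr fw_cons x ?y0" by (simp add: reduce_reduced reduced_reduce)
    also have "\<dots> = foldr fw_cons x (foldr fw_cons (rev (map inv_letter x)) [])"
      by (simp add: reduce_word_def)
    also have "\<dots> = []" using foldr_rinv[of "[]" "rev (map inv_letter x)"] rr by simp
    finally show ?thesis .
  qed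
  have m2: "?y0 \<otimes>\<^bsub>free_group n\<^esub> x = []"
  proof -
    have "?y0 \<otimes>\<^bsub>free_group n\<^esub> x = foldr fw_cons ?y0 x"
      by (simp add: fg_mult reduce_append reduce_reduced xr)
    also have "\<dots> = foldr fw_cons (rev (map inv_letter x)) x" using foldr_reduce[OF xr] .
    also have "\<dots> = foldr fw_cons (rev (map inv_letter x)) (foldr fw_cons x [])"
      using reduce_reduced[OF xr] by (simp add: reduce_word_def)
    also have "\<dots> = []" using foldr_rinv[of "[]" x] by simp
    finally show ?thesis .
  qed
  have uniq: "y = ?y0" if y: "y \<in> carrier (free_group n)" "x \<otimes>\<^bsub>free_group n\<^esub> y = []" for y
  proof -
    have yr: "reduced_word y" using y by (simp add: fg_carrier)
    have "foldr fw_cons x y = []" using y(2) by (simp add: fg_mult reduce_append reduce_reduced yr)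
    then have "y = foldr fw_cons (rev (map inv_letter x)) []"
      using foldr_rinv[OF yr, of x] by simp
    then show ?thesis by (simp add: reduce_word_def)
  qed
  show ?thesis unfolding m_inv_def fg_one
  proof (rule the1_equality)
    show "\<exists>!y. y \<in> carrier (free_group n) \<and> x \<otimes>\<^bsub>free_group n\<^esub> y = [] \<and> y \<otimes>\<^bsub>free_group n\<^esub> x = []"
    proof (rule ex1I[of _ ?y0])
      show "?y0 \<in> carrier (free_group n) \<and> x \<otimes>\<^bsub>free_group n\<^esub> ?y0 = [] \<and> ?y0 \<otimes>\<^bsub>free_group n\<^esub> x = []"
        using y0c m1 m2 by simp
    next
      fix y assume "y \<in> carrier (free_group n) \<and> x \<otimes>\<^bsub>free_group n\<^esub> y = [] \<and> y \<otimes>\<^bsub>free_group n\<^esub> x = []"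
      then show "y = ?y0" using uniq by simp
    qed
    show "?y0 \<in> carrier (free_group n) \<and> x \<otimes>\<^bsub>free_group n\<^esub> ?y0 = [] \<and> ?y0 \<otimes>\<^bsub>free_group n\<^esub> x = []"
      using y0c m1 m2 by simp
  qed
qed

lemma fg_inv_closed: "x \<in> carrier (free_group n) \<Longrightarrow> inv\<^bsub>free_group n\<^esub> x \<in> carrier (free_group n)"
proof -
  assume x: "x \<in> carrier (free_group n)"
  have s1: "set (rev (map inv_letter x)) \<subseteq> {..<n} \<times> UNIV"
    using x by (auto simp: fg_carrier inv_letter_def)
  show ?thesis
    using s1 set_reduce[of "rev (map inv_letter x)"] reduced_reduce[of "rev (map inv_letter x)"]
    unfolding fg_inv[OF x] fg_carrier by blast
qed

lemma esum_fg_inv: "x \<in> carrier (free_group n) \<Longrightarrow> esum j (inv\<^bsub>free_group n\<^esub> x) = - esum j x"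
  by (simp add: fg_inv esum_rinv)

lemma esum_derived:
  assumes "w \<in> derived (free_group n) (carrier (free_group n))"
  shows "esum j w = 0"
proof -
  let ?F = "free_group n"
  have dc: "h \<in> carrier ?F \<and> esum j h = 0" if "h \<in> derived_set ?F (carrier ?F)" for h
  proof -
    from that obtain h1 h2 where h: "h1 \<in> carrier ?F" "h2 \<in> carrier ?F"
      and hh: "h = h1 \<otimes>\<^bsub>?F\<^esub> h2 \<otimes>\<^bsub>?F\<^esub> inv\<^bsub>?F\<^esub> h1 \<otimes>\<^bsub>?F\<^esub> inv\<^bsub>?F\<^esub> h2"
      by (auto simp del: fg_mult)
    have "h \<in> carrier ?F" unfolding hh using h by (simp add: fg_mult_closed fg_inv_closed)
    moreover have "esum j h = 0" using h unfolding hh by (simp add: esum_fg_inv fg_mult)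
    ultimately show ?thesis by simp
  qed
  from assms[unfolded derived_def] show ?thesis
  proof (induction rule: generate.induct)
    case one then show ?case by (simp add: fg_one)
  next
    case (incl h) then show ?case using dc[of h] by simp
  next
    case (inv h)
    then have c: "h \<in> carrier ?F" and e: "esum j h = 0" using dc[of h] by simp_all
    show ?case using esum_fg_inv[OF c, of j] e by simp
  next
    case (eng h1 h2) then show ?case by (simp add: fg_mult)
  qed
qed



definition stepo :: "nat \<Rightarrow> bool \<Rightarrow> nat \<Rightarrow> nat" where
  "stepo e b a = (if b then (a + e - 1) mod e else (a + 1) mod e)"

fun Qw :: "('a, 'b) monoid_scheme \<Rightarrow> nat \<Rightarrow> (nat \<Rightarrow> nat \<Rightarrow> 'a) \<Rightarrow> nat \<Rightarrow> letter list \<Rightarrow> 'a" where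
  "Qw G e s a [] = \<one>\<^bsub>G\<^esub>"
| "Qw G e s a (l # w) = (if fst l = 0 then Qw G e s (stepo e (snd l) a) w
      else (if snd l then inv\<^bsub>G\<^esub> (s a (fst l)) else s a (fst l)) \<otimes>\<^bsub>G\<^esub> Qw G e s a w)"

fun offw :: "nat \<Rightarrow> nat \<Rightarrow> letter list \<Rightarrow> nat" where
  "offw e a [] = a"
| "offw e a (l # w) = (if fst l = 0 then offw e (stepo e (snd l) a) w else offw e a w)"

lemma stepo_lt: "0 < e \<Longrightarrow> stepo e b a < e"
  by (simp add: stepo_def)

lemma offw_lt: "0 < e \<Longrightarrow> a < e \<Longrightarrow> offw e a w < e"
  by (induction w arbitrary: a) (auto simp: stepo_lt)

lemma offw_mod: "0 < e \<Longrightarrow> a < e \<Longrightarrow> int (offw e a w) mod int e = (int a + esum 0 w) mod int e"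
proof (induction w arbitrary: a)
  case Nil then show ?case by simp
next
  case (Cons l w)
  obtain i b where l: "l = (i, b)" by (cases l)
  show ?case
  proof (cases "i = 0")
    case True
    have st: "stepo e b a < e" using Cons.prems stepo_lt by blast
    have IH: "int (offw e (stepo e b a) w) mod int e = (int (stepo e b a) + esum 0 w) mod int e"
      using Cons.IH[OF Cons.prems(1) st] .
    have "int (stepo e b a) mod int e = (int a + lsgn 0 l) mod int e"
    proof (cases b)
      case True
      have "int ((a + e - 1) mod e) = (int a + int e - 1) mod int e"
        using Cons.prems by (simp add: zmod_int of_nat_diff)
      moreover have "(int a + int e - 1) mod int e = (int a - 1) mod int e"
      proof -
        have "int a + int e - 1 = int e + (int a - 1)" by simp
        then show ?thesis by (simp only: mod_add_self1)
      qed
      ultimately show ?thesis using True l \<open>i = 0\<close> by (simp add: stepo_def lsgn_def)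
    next
      case False
      then show ?thesis using l \<open>i = 0\<close> by (simp add: stepo_def lsgn_def zmod_int add.commute)
    qed
    then have "(int (stepo e b a) + esum 0 w) mod int e = (int a + lsgn 0 l + esum 0 w) mod int e"
      by (metis mod_add_left_eq)
    then show ?thesis using IH l True by (simp add: add.assoc)
  next
    case False
    then show ?thesis using Cons l by (simp add: lsgn_def)
  qed
qed

lemma (in group) pow_mod_order:
  assumes g: "g \<in> carrier G"
  shows "g [^] (m::nat) = g [^] (m mod order G)"
proof -
  have "g [^] m = g [^] (order G * (m div order G) + m mod order G)" by simp
  also have "\<dots> = (g [^] order G) [^] (m div order G) \<otimes> g [^] (m mod order G)"
    using g by (simp add: nat_pow_mult nat_pow_pow)
  also have "\<dots> = g [^] (m mod order G)" using g by (simp add: pow_order_eq_1)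
  finally show ?thesis .
qed

lemma eval_Cons: "eval_word G u (l # w) = (if snd l then inv\<^bsub>G\<^esub> (u (fst l)) else u (fst l)) \<otimes>\<^bsub>G\<^esub> eval_word G u w"
  by (cases l) (simp add: eval_word_def)

lemma (in group) eval_closed:
  "(\<And>j. j \<in> fst ` set w \<Longrightarrow> u j \<in> carrier G) \<Longrightarrow> eval_word G u w \<in> carrier G"
  by (induction w) (auto simp: eval_Cons eval_word_def[of G u "[]"])

lemma (in group) Qw_closed:
  "(\<And>b j. b < e \<Longrightarrow> j \<in> fst ` set w \<Longrightarrow> j \<noteq> 0 \<Longrightarrow> s b j \<in> carrier G) \<Longrightarrow> a < e \<Longrightarrow> 0 < e \<Longrightarrow> Qw G e s a w \<in> carrier G"
  by (induction w arbitrary: a) (auto simp: stepo_lt)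

lemma (in group) eval_Qw:
  assumes g: "g \<in> carrier G" and u0: "u 0 = g"
    and uc: "\<And>j. j \<in> fst ` set w \<Longrightarrow> u j \<in> carrier G"
    and s: "\<And>b j. b < order G \<Longrightarrow> j \<in> fst ` set w \<Longrightarrow> j \<noteq> 0 \<Longrightarrow> s b j = g [^] b \<otimes> u j \<otimes> inv (g [^] b)"
    and e: "0 < order G" and a: "a < order G"
  shows "g [^] a \<otimes> eval_word G u w = Qw G (order G) s a w \<otimes> g [^] offw (order G) a w"
  using uc s a
proof (induction w arbitrary: a)
  case Nil then show ?case using g by (simp add: eval_word_def)
next
  case (Cons l w)
  obtain i b where l: "l = (i, b)" by (cases l)
  have uc': "\<And>j. j \<in> fst ` set w \<Longrightarrow> u j \<in> carrier G" using Cons.prems(1) by auto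
  have s': "\<And>b j. b < order G \<Longrightarrow> j \<in> fst ` set w \<Longrightarrow> j \<noteq> 0 \<Longrightarrow> s b j = g [^] b \<otimes> u j \<otimes> inv (g [^] b)"
    using Cons.prems(2) by auto
  have ui: "u i \<in> carrier G" using Cons.prems(1) l by auto
  have evc: "eval_word G u w \<in> carrier G" using eval_closed uc' by blast
  show ?case
  proof (cases "i = 0")
    case True
    have st: "stepo (order G) b a < order G" using e stepo_lt by blast
    have IH: "g [^] stepo (order G) b a \<otimes> eval_word G u w =
        Qw G (order G) s (stepo (order G) b a) w \<otimes> g [^] offw (order G) (stepo (order G) b a) w"
      using Cons.IH[OF uc' s' st] .
    have key: "g [^] a \<otimes> (if b then inv g else g) = g [^] stepo (order G) b a"
    proof (cases b)
      case False
      have "g [^] a \<otimes> g = g [^] (a + 1)" using g by (simp add: nat_pow_mult)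
      also have "\<dots> = g [^] ((a + 1) mod order G)" using pow_mod_order g by blast
      finally show ?thesis using False by (simp add: stepo_def)
    next
      case True
      have "a + order G = Suc (a + order G - 1)" using e by simp
      then have "g [^] (a + order G - 1) \<otimes> g = g [^] (a + order G)"
        by (metis nat_pow_Suc)
      also have "\<dots> = g [^] a \<otimes> g [^] order G" using g by (simp add: nat_pow_mult)
      also have "\<dots> = g [^] a" using g by (simp add: pow_order_eq_1)
      finally have "g [^] a \<otimes> inv g = g [^] (a + order G - 1)"
        using g by (metis inv_closed nat_pow_closed r_one r_inv m_assoc)
      also have "\<dots> = g [^] ((a + order G - 1) mod order G)" using pow_mod_order g by blast
      finally show ?thesis using True by (simp add: stepo_def)
    qed
    have "g [^] a \<otimes> eval_word G u (l # w) = (g [^] a \<otimes> (if b then inv g else g)) \<otimes> eval_word G u w"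
      using l True u0 g evc by (simp add: eval_Cons m_assoc)
    also have "\<dots> = g [^] stepo (order G) b a \<otimes> eval_word G u w" using key by simp
    finally show ?thesis using IH l True by simp
  next
    case False
    have IH: "g [^] a \<otimes> eval_word G u w = Qw G (order G) s a w \<otimes> g [^] offw (order G) a w"
      using Cons.IH[OF uc' s' Cons.prems(3)] .
    have sa: "s a i = g [^] a \<otimes> u i \<otimes> inv (g [^] a)" using Cons.prems(2)[of a i] Cons.prems(3) l False by simp
    have v: "(if b then inv (u i) else u i) \<in> carrier G" using ui by simp
    have conj: "g [^] a \<otimes> (if b then inv (u i) else u i) = (if b then inv (s a i) else s a i) \<otimes> g [^] a"
      using g ui unfolding sa by (auto simp: m_assoc inv_mult_group)
    have "g [^] a \<otimes> eval_word G u (l # w) = (g [^] a \<otimes> (if b then inv (u i) else u i)) \<otimes> eval_word G u w"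
      using l g evc v by (simp add: eval_Cons m_assoc)
    also have "\<dots> = (if b then inv (s a i) else s a i) \<otimes> (g [^] a \<otimes> eval_word G u w)"
      unfolding conj using g evc ui sa by (simp add: m_assoc)
    also have "\<dots> = (if b then inv (s a i) else s a i) \<otimes> (Qw G (order G) s a w \<otimes> g [^] offw (order G) a w)"
      using IH by simp
    moreover have Qc: "Qw G (order G) s a w \<in> carrier G"
    proof (rule Qw_closed)
      fix b' j assume "b' < order G" "j \<in> fst ` set w" "j \<noteq> 0"
      then show "s b' j \<in> carrier G" using s' uc' g by simp
    qed (use Cons.prems(3) e in auto)
    moreover have sc: "s a i \<in> carrier G" using sa g ui by simp
    ultimately show ?thesis using l False g
      by (simp add: m_assoc)
  qed
qed



lemma (in group) inv_cancel_left[simp]: "x \<in> carrier G \<Longrightarrow> y \<in> carrier G \<Longrightarrow> inv x \<otimes> (x \<otimes> y) = y"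
  by (simp add: m_assoc[symmetric])

lemma (in group) inv_cancel_left'[simp]: "x \<in> carrier G \<Longrightarrow> y \<in> carrier G \<Longrightarrow> x \<otimes> (inv x \<otimes> y) = y"
  by (simp add: m_assoc[symmetric])

lemma (in group) Qw_cong:
  "(\<And>b j. b < e \<Longrightarrow> j \<in> fst ` set w \<Longrightarrow> j \<noteq> 0 \<Longrightarrow> s b j = s' b j) \<Longrightarrow> a < e \<Longrightarrow> 0 < e
   \<Longrightarrow> Qw G e s a w = Qw G e s' a w"
  by (induction w arbitrary: a) (auto simp: stepo_lt)

lemma (in group) Qw_conj:
  "(\<And>b j. b < e \<Longrightarrow> j \<in> fst ` set w \<Longrightarrow> j \<noteq> 0 \<Longrightarrow> s b j \<in> carrier G) \<Longrightarrow> c \<in> carrier G \<Longrightarrow> a < e \<Longrightarrow> 0 < e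
   \<Longrightarrow> Qw G e (\<lambda>b j. c \<otimes> s b j \<otimes> inv c) a w = c \<otimes> Qw G e s a w \<otimes> inv c"
proof (induction w arbitrary: a)
  case Nil then show ?case by simp
next
  case (Cons l w)
  have hs: "\<And>b j. b < e \<Longrightarrow> j \<in> fst ` set w \<Longrightarrow> j \<noteq> 0 \<Longrightarrow> s b j \<in> carrier G"
    using Cons.prems(1) by auto
  have Qc: "Qw G e s a w \<in> carrier G" using Qw_closed[OF hs Cons.prems(3,4)] .
  show ?case
  proof (cases "fst l = 0")
    case True
    have st: "stepo e (snd l) a < e" using Cons.prems(4) stepo_lt by blast
    show ?thesis using Cons.IH[OF hs Cons.prems(2) st Cons.prems(4)] True by simp
  next
    case False
    have IH: "Qw G e (\<lambda>b j. c \<otimes> s b j \<otimes> inv c) a w = c \<otimes> Qw G e s a w \<otimes> inv c"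
      using Cons.IH[OF hs Cons.prems(2-4)] .
    have sc: "s a (fst l) \<in> carrier G" using Cons.prems(1)[of a "fst l"] Cons.prems(3) False by simp
    have c: "c \<in> carrier G" by fact
    have v: "(if snd l then inv (c \<otimes> s a (fst l) \<otimes> inv c) else c \<otimes> s a (fst l) \<otimes> inv c)
           = c \<otimes> (if snd l then inv (s a (fst l)) else s a (fst l)) \<otimes> inv c"
      using sc c by (auto simp: inv_mult_group m_assoc)
    have vc: "(if snd l then inv (s a (fst l)) else s a (fst l)) \<in> carrier G" using sc by simp
    have "Qw G e (\<lambda>b j. c \<otimes> s b j \<otimes> inv c) a (l # w)
        = (c \<otimes> (if snd l then inv (s a (fst l)) else s a (fst l)) \<otimes> inv c) \<otimes> (c \<otimes> Qw G e s a w \<otimes> inv c)"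
      using False IH v by simp
    also have "\<dots> = c \<otimes> ((if snd l then inv (s a (fst l)) else s a (fst l)) \<otimes> Qw G e s a w) \<otimes> inv c"
      using c vc Qc by (simp add: m_assoc)
    finally show ?thesis using False by simp
  qed
qed

lemma (in group) op_foldr_cong:
  "(\<And>i. i \<in> set xs \<Longrightarrow> z i = z' i) \<Longrightarrow> foldr (\<lambda>i acc. z i \<otimes> acc) xs \<one> = foldr (\<lambda>i acc. z' i \<otimes> acc) xs \<one>"
  by (induction xs) auto

lemma (in group) op_foldr_closed:
  "(\<And>i. i \<in> set xs \<Longrightarrow> z i \<in> carrier G) \<Longrightarrow> foldr (\<lambda>i acc. z i \<otimes> acc) xs \<one> \<in> carrier G"
  by (induction xs) auto

lemma (in group) op_foldr_conj:
  assumes c: "c \<in> carrier G"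
  shows "(\<And>i. i \<in> set xs \<Longrightarrow> z i \<in> carrier G) \<Longrightarrow>
     foldr (\<lambda>i acc. (c \<otimes> z i \<otimes> inv c) \<otimes> acc) xs \<one> = c \<otimes> foldr (\<lambda>i acc. z i \<otimes> acc) xs \<one> \<otimes> inv c"
proof (induction xs)
  case Nil then show ?case using c by simp
next
  case (Cons x xs)
  have fc: "foldr (\<lambda>i acc. z i \<otimes> acc) xs \<one> \<in> carrier G" by (rule op_foldr_closed) (use Cons.prems in auto)
  have zc: "z x \<in> carrier G" using Cons.prems by simp
  show ?case using Cons c fc zc by (simp add: m_assoc)
qed

lemma (in group) conj_class_conj:
  assumes c: "c \<in> carrier G" and z: "z \<in> carrier G" and gi: "gi \<in> carrier G"
  shows "c \<otimes> z \<otimes> inv c \<in> conj_class G gi \<longleftrightarrow> z \<in> conj_class G gi"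
proof
  assume "c \<otimes> z \<otimes> inv c \<in> conj_class G gi"
  then obtain h where h: "h \<in> carrier G" and eq: "c \<otimes> z \<otimes> inv c = h \<otimes> gi \<otimes> inv h"
    unfolding conj_class_def by blast
  have "z = inv c \<otimes> (c \<otimes> z \<otimes> inv c) \<otimes> c" using c z by (simp add: m_assoc)
  also have "\<dots> = (inv c \<otimes> h) \<otimes> gi \<otimes> inv (inv c \<otimes> h)"
    unfolding eq using c h gi by (simp add: m_assoc inv_mult_group)
  finally show "z \<in> conj_class G gi"
    unfolding conj_class_def using c h by blast
next
  assume "z \<in> conj_class G gi"
  then obtain h where h: "h \<in> carrier G" and eq: "z = h \<otimes> gi \<otimes> inv h"
    unfolding conj_class_def by blast
  have "c \<otimes> z \<otimes> inv c = (c \<otimes> h) \<otimes> gi \<otimes> inv (c \<otimes> h)"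
    unfolding eq using c h gi by (simp add: m_assoc inv_mult_group)
  then show "c \<otimes> z \<otimes> inv c \<in> conj_class G gi"
    unfolding conj_class_def using c h by blast
qed

lemma (in group) conj_class_closed: "gi \<in> carrier G \<Longrightarrow> z \<in> conj_class G gi \<Longrightarrow> z \<in> carrier G"
  unfolding conj_class_def by auto

lemma (in group) conj_pow_Suc:
  assumes g: "g \<in> carrier G" and y: "y \<in> carrier G"
  shows "g \<otimes> (g [^] a \<otimes> y \<otimes> inv (g [^] a)) \<otimes> inv g = g [^] Suc a \<otimes> y \<otimes> inv (g [^] Suc a)"
proof -
  have e: "g [^] Suc a = g \<otimes> g [^] a" using g by (metis nat_pow_Suc2)
  have "g \<otimes> (g [^] a \<otimes> y \<otimes> inv (g [^] a)) \<otimes> inv g = (g \<otimes> g [^] a) \<otimes> y \<otimes> inv (g \<otimes> g [^] a)"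
    using g y by (simp add: m_assoc inv_mult_group del: nat_pow_Suc)
  then show ?thesis unfolding e .
qed



lemma (in group) main_aux:
  fixes n k :: nat
    and w :: "letter list" and g :: "nat \<Rightarrow> 'a" and C :: "nat \<Rightarrow> 'a set"
  assumes "n \<ge> 1"
    and "w \<in> carrier (free_group n)"
    and "w \<in> derived (free_group n) (carrier (free_group n))"
    and "finite (carrier G)"
    and "\<And>i. i < k \<Longrightarrow> g i \<in> carrier G \<and> C i = conj_class G (g i)"
  shows "order G dvd card {(u, z). u \<in> ({..<n} \<rightarrow>\<^sub>E carrier G) \<and> z \<in> ({..<k} \<rightarrow>\<^sub>E UNIV) \<and>
            (\<forall>i<k. z i \<in> C i) \<and>
            eval_word G u w \<otimes> ordered_prod G z k = \<one>}"
proof -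
  have n1: "0 < n" using assms(1) by simp
  have finG: "finite (carrier G)" using assms(4) .
  have e0: "0 < order G"
    unfolding order_def using finG one_closed by (auto simp: card_gt_0_iff)
  have es: "esum 0 w = 0" using esum_derived[OF assms(3)] .
  have wl: "\<And>j. j \<in> fst ` set w \<Longrightarrow> j < n" using assms(2) by (auto simp: fg_carrier)
  have gC: "\<And>i. i < k \<Longrightarrow> g i \<in> carrier G" and Cdef: "\<And>i. i < k \<Longrightarrow> C i = conj_class G (g i)"
    using assms(5) by auto
  have off0: "offw (order G) 0 w = 0"
  proof -
    have "int (offw (order G) 0 w) mod int (order G) = 0"
      using offw_mod[OF e0 e0, of w] es by simp
    moreover have "offw (order G) 0 w < order G" using offw_lt[OF e0 e0] .
    ultimately show ?thesis by (metis mod_less of_nat_eq_0_iff zmod_int)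
  qed
  define J where "J = {Suc 0..<n+k}"
  define XX where "XX = {..<order G} \<rightarrow>\<^sub>E (J \<rightarrow>\<^sub>E carrier G)"
  define act where "act = (\<lambda>c s. \<lambda>a\<in>{..<order G}. \<lambda>j\<in>J. c \<otimes> s a j \<otimes> inv c)"
  define sig where "sig = (\<lambda>s::nat \<Rightarrow> nat \<Rightarrow> 'a. \<lambda>a\<in>{..<order G}. s ((a + 1) mod order G))"
  define P where "P = (\<lambda>s. (\<forall>i<k. s 0 (n+i) \<in> C i) \<and>
       Qw G (order G) s 0 w \<otimes> ordered_prod G (\<lambda>i. s 0 (n+i)) k = \<one>)"
  define yv where "yv = (\<lambda>(u::nat \<Rightarrow> 'a) (z::nat \<Rightarrow> 'a) j. if j < n then u j else z (j - n))"
  define mk where "mk = (\<lambda>u z. \<lambda>a\<in>{..<order G}. \<lambda>j\<in>J. (u 0) [^] a \<otimes> yv u z j \<otimes> inv ((u 0) [^] a))"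
  define S where "S = {(u, z). u \<in> ({..<n} \<rightarrow>\<^sub>E carrier G) \<and> z \<in> ({..<k} \<rightarrow>\<^sub>E UNIV) \<and>
            (\<forall>i<k. z i \<in> C i) \<and> eval_word G u w \<otimes> ordered_prod G z k = \<one>}"
  define T where "T = {(g, s). g \<in> carrier G \<and> s \<in> XX \<and> P s \<and> act g s = sig s}"

  have opdef: "\<And>f. ordered_prod G f k = foldr (\<lambda>i acc. f i \<otimes> acc) [0..<k] \<one>"
    by (simp add: ordered_prod_def)
  have J_letter: "\<And>j. j \<in> fst ` set w \<Longrightarrow> j \<noteq> 0 \<Longrightarrow> j \<in> J"
    using wl unfolding J_def by force
  have J_n: "\<And>i. i < k \<Longrightarrow> n + i \<in> J" using n1 unfolding J_def by auto

  have yvc: "yv u z j \<in> carrier G" if u: "u \<in> {..<n} \<rightarrow>\<^sub>E carrier G" and z: "\<And>i. i < k \<Longrightarrow> z i \<in> carrier G"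
      and j: "j \<in> J" for u z j
    using u z j unfolding yv_def J_def by auto
  have mk_app: "mk u z a j = (u 0) [^] a \<otimes> yv u z j \<otimes> inv ((u 0) [^] a)"
    if "a < order G" "j \<in> J" for u z a j
    using that unfolding mk_def by simp
  have mk_0: "mk u z 0 j = yv u z j"
    if u: "u \<in> {..<n} \<rightarrow>\<^sub>E carrier G" and z: "\<And>i. i < k \<Longrightarrow> z i \<in> carrier G" and j: "j \<in> J" for u z j
    using mk_app[OF e0 j, of u z] yvc[OF u z j] by simp
  have K1: "mk u z \<in> XX"
    if u: "u \<in> {..<n} \<rightarrow>\<^sub>E carrier G" and z: "\<And>i. i < k \<Longrightarrow> z i \<in> carrier G" for u z
  proof -
    have u0: "u 0 \<in> carrier G" using u n1 by auto
    show ?thesis unfolding XX_def mk_def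
      using u0 yvc[OF u z] by (auto simp: restrict_PiE_iff)
  qed
  have K2: "Qw G (order G) (mk u z) 0 w = eval_word G u w"
    if u: "u \<in> {..<n} \<rightarrow>\<^sub>E carrier G" and z: "\<And>i. i < k \<Longrightarrow> z i \<in> carrier G" for u z
  proof -
    have u0: "u 0 \<in> carrier G" using u n1 by auto
    have uc: "\<And>j. j \<in> fst ` set w \<Longrightarrow> u j \<in> carrier G" using u wl by auto
    have s: "\<And>b j. b < order G \<Longrightarrow> j \<in> fst ` set w \<Longrightarrow> j \<noteq> 0 \<Longrightarrow>
              mk u z b j = u 0 [^] b \<otimes> u j \<otimes> inv (u 0 [^] b)"
    proof -
      fix b j assume "b < order G" "j \<in> fst ` set w" "j \<noteq> 0"
      then show "mk u z b j = u 0 [^] b \<otimes> u j \<otimes> inv (u 0 [^] b)"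
        using mk_app[of b j u z] J_letter wl unfolding yv_def by simp
    qed
    have "u 0 [^] (0::nat) \<otimes> eval_word G u w = Qw G (order G) (mk u z) 0 w \<otimes> u 0 [^] offw (order G) 0 w"
      using eval_Qw[where g="u 0" and u=u and w=w and s="mk u z" and a=0, OF u0 refl uc s e0 e0] .
    moreover have "eval_word G u w \<in> carrier G" using eval_closed uc by blast
    moreover have "Qw G (order G) (mk u z) 0 w \<in> carrier G"
    proof (rule Qw_closed)
      fix b j assume "b < order G" "j \<in> fst ` set w" "j \<noteq> 0"
      then show "mk u z b j \<in> carrier G" using s uc u0 by simp
    qed (use e0 in auto)
    ultimately show ?thesis using off0 by simp
  qed
  have K3: "ordered_prod G (\<lambda>i. mk u z 0 (n+i)) k = ordered_prod G z k"
    if u: "u \<in> {..<n} \<rightarrow>\<^sub>E carrier G" and z: "\<And>i. i < k \<Longrightarrow> z i \<in> carrier G" for u z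
    unfolding opdef
  proof (rule op_foldr_cong)
    fix i assume "i \<in> set [0..<k]"
    then have i: "i < k" by simp
    show "mk u z 0 (n + i) = z i" using mk_0[OF u z J_n[OF i]] i unfolding yv_def by simp
  qed
  have K4: "\<forall>i<k. mk u z 0 (n+i) = z i"
    if u: "u \<in> {..<n} \<rightarrow>\<^sub>E carrier G" and z: "\<And>i. i < k \<Longrightarrow> z i \<in> carrier G" for u z
    using mk_0[OF u z J_n] unfolding yv_def by simp
  have K5: "act (u 0) (mk u z) = sig (mk u z)"
    if u: "u \<in> {..<n} \<rightarrow>\<^sub>E carrier G" and z: "\<And>i. i < k \<Longrightarrow> z i \<in> carrier G" for u z
  proof -
    have u0: "u 0 \<in> carrier G" using u n1 by auto
    show ?thesis unfolding act_def sig_def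
    proof (rule restrict_ext)
      fix a assume a: "a \<in> {..<order G}"
      have a1: "(a + 1) mod order G < order G" using e0 by simp
      have "(\<lambda>j\<in>J. u 0 \<otimes> mk u z a j \<otimes> inv (u 0)) = (\<lambda>j\<in>J. mk u z ((a + 1) mod order G) j)"
      proof (rule restrict_ext)
        fix j assume j: "j \<in> J"
        have y: "yv u z j \<in> carrier G" using yvc[OF u z j] .
        have "u 0 \<otimes> mk u z a j \<otimes> inv (u 0) = u 0 [^] Suc a \<otimes> yv u z j \<otimes> inv (u 0 [^] Suc a)"
          using mk_app[of a j u z] a j conj_pow_Suc[OF u0 y] by simp
        also have "\<dots> = u 0 [^] ((a + 1) mod order G) \<otimes> yv u z j \<otimes> inv (u 0 [^] ((a + 1) mod order G))"
          using pow_mod_order[OF u0, of "Suc a"] by simp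
        also have "\<dots> = mk u z ((a + 1) mod order G) j" using mk_app[OF a1 j] by simp
        finally show "u 0 \<otimes> mk u z a j \<otimes> inv (u 0) = mk u z ((a + 1) mod order G) j" .
      qed
      moreover have "mk u z ((a + 1) mod order G) = (\<lambda>j\<in>J. mk u z ((a + 1) mod order G) j)"
        using a1 unfolding mk_def by (auto simp: restrict_def fun_eq_iff)
      ultimately show "(\<lambda>j\<in>J. u 0 \<otimes> mk u z a j \<otimes> inv (u 0)) = mk u z ((a + 1) mod order G)"
        by simp
    qed
  qed

  have actc: "act c x \<in> XX" if c: "c \<in> carrier G" and x: "x \<in> XX" for c x
  proof -
    have "\<And>a j. a < order G \<Longrightarrow> j \<in> J \<Longrightarrow> x a j \<in> carrier G" using x unfolding XX_def by auto
    then show ?thesis unfolding act_def XX_def using c by (auto simp: restrict_PiE_iff)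
  qed
  have act_app: "act c x a j = c \<otimes> x a j \<otimes> inv c" if "a < order G" "j \<in> J" for c x a j
    using that unfolding act_def by simp
  have XX_ext: "x = y" if x: "x \<in> XX" and y: "y \<in> XX" and eq: "\<And>a j. a < order G \<Longrightarrow> j \<in> J \<Longrightarrow> x a j = y a j" for x y
  proof (rule PiE_ext[OF x[unfolded XX_def] y[unfolded XX_def]])
    fix a assume a: "a \<in> {..<order G}"
    show "x a = y a"
      by (rule PiE_ext[of _ J "\<lambda>_. carrier G"]) (use x y a eq in \<open>auto simp: XX_def\<close>)
  qed
  have XXc: "x a j \<in> carrier G" if "x \<in> XX" "a < order G" "j \<in> J" for x a j
    using that unfolding XX_def by auto
  have sigc: "sig x \<in> XX" if x: "x \<in> XX" for x
  proof -
    have "\<And>a. a < order G \<Longrightarrow> x ((a + 1) mod order G) \<in> J \<rightarrow>\<^sub>E carrier G"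
      using x e0 unfolding XX_def by auto
    then show ?thesis unfolding sig_def XX_def by (auto simp: restrict_PiE_iff)
  qed
  have sig_app: "sig x a = x ((a + 1) mod order G)" if "a < order G" for x a
    using that unfolding sig_def by simp
  have Pinv: "P (act c x) = P x" if c: "c \<in> carrier G" and x: "x \<in> XX" for c x
  proof -
    have cl: "(\<forall>i<k. act c x 0 (n+i) \<in> C i) = (\<forall>i<k. x 0 (n+i) \<in> C i)"
      using act_app[OF e0 J_n] conj_class_conj[OF c XXc[OF x e0 J_n] gC] Cdef by simp
    have Qx: "Qw G (order G) x 0 w \<in> carrier G"
    proof (rule Qw_closed)
      fix b j assume "b < order G" "j \<in> fst ` set w" "j \<noteq> 0"
      then show "x b j \<in> carrier G" using XXc[OF x] J_letter by simp
    qed (use e0 in auto)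
    have Q: "Qw G (order G) (act c x) 0 w = c \<otimes> Qw G (order G) x 0 w \<otimes> inv c"
    proof -
      have "Qw G (order G) (act c x) 0 w = Qw G (order G) (\<lambda>b j. c \<otimes> x b j \<otimes> inv c) 0 w"
      proof (rule Qw_cong)
        fix b j assume "b < order G" "j \<in> fst ` set w" "j \<noteq> 0"
        then show "act c x b j = c \<otimes> x b j \<otimes> inv c" using act_app J_letter by simp
      qed (use e0 in auto)
      also have "\<dots> = c \<otimes> Qw G (order G) x 0 w \<otimes> inv c"
      proof (rule Qw_conj)
        fix b j assume "b < order G" "j \<in> fst ` set w" "j \<noteq> 0"
        then show "x b j \<in> carrier G" using XXc[OF x] J_letter by simp
      qed (use e0 c in auto)
      finally show ?thesis .
    qed
    have Ox: "ordered_prod G (\<lambda>i. x 0 (n+i)) k \<in> carrier G"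
      unfolding opdef by (rule op_foldr_closed) (use XXc[OF x e0 J_n] in auto)
    have O: "ordered_prod G (\<lambda>i. act c x 0 (n+i)) k = c \<otimes> ordered_prod G (\<lambda>i. x 0 (n+i)) k \<otimes> inv c"
    proof -
      have "ordered_prod G (\<lambda>i. act c x 0 (n+i)) k = foldr (\<lambda>i acc. (c \<otimes> x 0 (n+i) \<otimes> inv c) \<otimes> acc) [0..<k] \<one>"
        unfolding opdef by (rule op_foldr_cong) (use act_app[OF e0 J_n] in auto)
      also have "\<dots> = c \<otimes> ordered_prod G (\<lambda>i. x 0 (n+i)) k \<otimes> inv c"
        unfolding opdef by (rule op_foldr_conj[OF c]) (use XXc[OF x e0 J_n] in auto)
      finally show ?thesis .
    qed
    have "(c \<otimes> Qw G (order G) x 0 w \<otimes> inv c) \<otimes> (c \<otimes> ordered_prod G (\<lambda>i. x 0 (n+i)) k \<otimes> inv c)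
        = c \<otimes> (Qw G (order G) x 0 w \<otimes> ordered_prod G (\<lambda>i. x 0 (n+i)) k) \<otimes> inv c"
      using c Qx Ox by (simp add: m_assoc)
    moreover have "c \<otimes> y \<otimes> inv c = \<one> \<longleftrightarrow> y = \<one>" if y: "y \<in> carrier G" for y
    proof
      assume h: "c \<otimes> y \<otimes> inv c = \<one>"
      have "y = inv c \<otimes> (c \<otimes> y \<otimes> inv c) \<otimes> c" using c y by (simp add: m_assoc)
      then show "y = \<one>" using h c by simp
    qed (use c in simp)
    ultimately show ?thesis unfolding P_def using cl Q O Qx Ox by simp
  qed
  have dvdT: "order G dvd card T"
    unfolding T_def
  proof (rule count_dvd[where G=G])
    show "group G" by (rule is_group)
    show "finite (carrier G)" by fact
    show "finite XX" unfolding XX_def using finG by (intro finite_PiE) (auto simp: J_def)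
    show "\<And>c x. c \<in> carrier G \<Longrightarrow> x \<in> XX \<Longrightarrow> act c x \<in> XX" by (rule actc)
    show "act \<one> x = x" if x: "x \<in> XX" for x
      by (rule XX_ext[OF actc[OF one_closed x] x]) (use act_app XXc[OF x] in simp)
    show "act (c \<otimes> d) x = act c (act d x)" if c: "c \<in> carrier G" and d: "d \<in> carrier G" and x: "x \<in> XX" for c d x
      by (rule XX_ext[OF actc[OF m_closed[OF c d] x] actc[OF c actc[OF d x]]])
         (use act_app XXc[OF x] c d in \<open>simp add: m_assoc inv_mult_group\<close>)
    show "\<And>x. x \<in> XX \<Longrightarrow> sig x \<in> XX" by (rule sigc)
    show "act c (sig x) = sig (act c x)" if c: "c \<in> carrier G" and x: "x \<in> XX" for c x
    proof (rule XX_ext[OF actc[OF c sigc[OF x]] sigc[OF actc[OF c x]]])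
      fix a j assume a: "a < order G" and j: "j \<in> J"
      have a1: "(a + 1) mod order G < order G" using e0 by simp
      show "act c (sig x) a j = sig (act c x) a j"
        using act_app[OF a j] act_app[OF a1 j] sig_app[OF a] a by simp
    qed
    show "\<And>c x. c \<in> carrier G \<Longrightarrow> x \<in> XX \<Longrightarrow> P (act c x) = P x" by (rule Pinv)
  qed
  have Szc: "\<And>i. i < k \<Longrightarrow> z i \<in> carrier G" if "\<forall>i<k. z i \<in> C i" for z
    using that conj_class_closed[OF gC] Cdef by blast
  have inj: "inj_on (\<lambda>(u, z). (u 0, mk u z)) S"
  proof (rule inj_onI)
    fix p q assume p: "p \<in> S" and q: "q \<in> S" and eq: "(\<lambda>(u, z). (u 0, mk u z)) p = (\<lambda>(u, z). (u 0, mk u z)) q"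
    obtain u1 z1 where p1: "p = (u1, z1)" by (cases p)
    obtain u2 z2 where q1: "q = (u2, z2)" by (cases q)
    have u1: "u1 \<in> {..<n} \<rightarrow>\<^sub>E carrier G" and z1: "z1 \<in> {..<k} \<rightarrow>\<^sub>E UNIV" and z1c: "\<And>i. i < k \<Longrightarrow> z1 i \<in> carrier G"
      using p Szc unfolding p1 S_def by auto
    have u2: "u2 \<in> {..<n} \<rightarrow>\<^sub>E carrier G" and z2: "z2 \<in> {..<k} \<rightarrow>\<^sub>E UNIV" and z2c: "\<And>i. i < k \<Longrightarrow> z2 i \<in> carrier G"
      using q Szc unfolding q1 S_def by auto
    have e1: "u1 0 = u2 0" and e2: "mk u1 z1 = mk u2 z2" using eq unfolding p1 q1 by auto
    have yeq: "yv u1 z1 j = yv u2 z2 j" if j: "j \<in> J" for j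
      using mk_0[where u=u1 and z=z1, OF u1 z1c j] mk_0[where u=u2 and z=z2, OF u2 z2c j] e2 by simp
    have "u1 = u2"
    proof (rule PiE_ext[OF u1 u2])
      fix j assume j: "j \<in> {..<n}"
      show "u1 j = u2 j"
      proof (cases "j = 0")
        case True then show ?thesis using e1 by simp
      next
        case False
        then have "j \<in> J" using j unfolding J_def by auto
        then show ?thesis using yeq[of j] j unfolding yv_def by simp
      qed
    qed
    moreover have "z1 = z2"
    proof (rule PiE_ext[OF z1 z2])
      fix i assume i: "i \<in> {..<k}"
      then show "z1 i = z2 i" using yeq[OF J_n[of i]] unfolding yv_def by simp
    qed
    ultimately show "p = q" unfolding p1 q1 by simp
  qed
  have img1: "(\<lambda>(u, z). (u 0, mk u z)) ` S \<subseteq> T"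
  proof
    fix t assume "t \<in> (\<lambda>(u, z). (u 0, mk u z)) ` S"
    then obtain u z where uz: "(u, z) \<in> S" and t: "t = (u 0, mk u z)" by auto
    have u: "u \<in> {..<n} \<rightarrow>\<^sub>E carrier G" and zC: "\<forall>i<k. z i \<in> C i"
      and eqn: "eval_word G u w \<otimes> ordered_prod G z k = \<one>"
      using uz unfolding S_def by auto
    have zc: "\<And>i. i < k \<Longrightarrow> z i \<in> carrier G" using Szc[OF zC] .
    have u0: "u 0 \<in> carrier G" using u n1 by auto
    have "P (mk u z)" unfolding P_def
      using K2[OF u zc] K3[OF u zc] K4[OF u zc] zC eqn by simp
    then show "t \<in> T" unfolding T_def t using u0 K1[OF u zc] K5[OF u zc] by simp
  qed
  have img2: "T \<subseteq> (\<lambda>(u, z). (u 0, mk u z)) ` S"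
  proof
    fix t assume "t \<in> T"
    then obtain g0 s where t: "t = (g0, s)" and g0: "g0 \<in> carrier G" and s: "s \<in> XX" and Ps: "P s"
      and as: "act g0 s = sig s" unfolding T_def by auto
    define u where "u = (\<lambda>j\<in>{..<n}. if j = 0 then g0 else s 0 j)"
    define z where "z = (\<lambda>i\<in>{..<k}. s 0 (n + i))"
    have u: "u \<in> {..<n} \<rightarrow>\<^sub>E carrier G"
      unfolding u_def using g0 XXc[OF s e0] by (auto simp: J_def)
    have z: "z \<in> {..<k} \<rightarrow>\<^sub>E UNIV" unfolding z_def by simp
    have zC: "\<forall>i<k. z i \<in> C i" using Ps unfolding P_def z_def by simp
    have zc: "\<And>i. i < k \<Longrightarrow> z i \<in> carrier G" using Szc[OF zC] .
    have u0: "u 0 = g0" unfolding u_def using n1 by simp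
    have yv0: "yv u z j = s 0 j" if j: "j \<in> J" for j
      using j unfolding yv_def u_def z_def J_def by auto
    have spow: "\<forall>j\<in>J. s a j = g0 [^] a \<otimes> s 0 j \<otimes> inv (g0 [^] a)" if "a < order G" for a
      using that
    proof (induction a)
      case 0 then show ?case using XXc[OF s e0] by simp
    next
      case (Suc a)
      have a: "a < order G" using Suc.prems by simp
      show ?case
      proof
        fix j assume j: "j \<in> J"
        have "act g0 s a j = sig s a j" using as by simp
        then have "g0 \<otimes> s a j \<otimes> inv g0 = s (Suc a) j"
          using act_app[OF a j] sig_app[OF a] Suc.prems by simp
        then show "s (Suc a) j = g0 [^] Suc a \<otimes> s 0 j \<otimes> inv (g0 [^] Suc a)"
          using Suc.IH[OF a] j conj_pow_Suc[OF g0 XXc[OF s e0 j]] by simp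
      qed
    qed
    have smk: "s = mk u z"
    proof (rule XX_ext[OF s K1[OF u zc]])
      fix a j assume a: "a < order G" and j: "j \<in> J"
      show "s a j = mk u z a j" using spow[OF a] j mk_app[OF a j] yv0[OF j] u0 by simp
    qed
    have "eval_word G u w \<otimes> ordered_prod G z k = \<one>"
      using Ps K2[where u=u and z=z, OF u zc] K3[where u=u and z=z, OF u zc] unfolding P_def smk by simp
    then have "(u, z) \<in> S" unfolding S_def using u z zC by simp
    moreover have "t = (u 0, mk u z)" unfolding t u0 smk ..
    ultimately show "t \<in> (\<lambda>(u, z). (u 0, mk u z)) ` S" by force
  qed
  have "bij_betw (\<lambda>(u, z). (u 0, mk u z)) S T"
    unfolding bij_betw_def using inj img1 img2 by blast
  then have "card S = card T" by (rule bij_betw_same_card)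
  then show ?thesis using dvdT unfolding S_def by simp
qed


theorem mainTheorem7:
  fixes G :: "('a, 'b) monoid_scheme" and n k :: nat
    and w :: "letter list" and g :: "nat \<Rightarrow> 'a" and C :: "nat \<Rightarrow> 'a set"
  assumes "n \<ge> 1"
    and "w \<in> carrier (free_group n)"
    and "w \<in> derived (free_group n) (carrier (free_group n))"
    and "group G" and "finite (carrier G)"
    and "\<And>i. i < k \<Longrightarrow> g i \<in> carrier G \<and> C i = conj_class G (g i)"
  shows "order G dvd card {(u, z). u \<in> ({..<n} \<rightarrow>\<^sub>E carrier G) \<and> z \<in> ({..<k} \<rightarrow>\<^sub>E UNIV) \<and>
            (\<forall>i<k. z i \<in> C i) \<and>
            eval_word G u w \<otimes>\<^bsub>G\<^esub> ordered_prod G z k = \<one>\<^bsub>G\<^esub>}"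
  using group.main_aux[OF assms(4) assms(1,2,3,5), of k g C] assms(6) by blast

end
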